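(* Let $\Omega\subset[0,1]^d$ be a compact convex set with $|\Omega|\ge1/d!$. There exists a constant $\Lambda$ depending only on $d$ such that for any $1\le r\le\infty$ and any $0<\delta\le1$, every $f\in\mathcal{C}_r(\Omega)$ satisfies $|f(x)|\le\Lambda\delta^{-d/r}$ for all $x\in\Omega_\delta$; that is, $\mathcal{C}_r(\Omega)\subset\Lambda\delta^{-d/r}\cdot\mathcal{C}_\infty(\Omega_\delta)$ (restricting functions to $\Omega_\delta$). In fact $\Lambda=\max\{(d\Gamma(d/2)/\pi^{d/2})^{1/r},\ (d!)\,d\,2^{d+2}\}$ works.
   Context: $|\Omega|$ is Lebesgue measure. $\mathcal{C}_r(A)$ is the set of convex functions $f$ on $A$ with $\|f\|_{L^r(A)}\le1$ (for $r=\infty$: $\sup_A|f|\le1$). $\Omega_\delta=\{x\in\Omega:\operatorname{dist}(x,\partial\Omega)\ge\delta\}$. For $r=\infty$, $\delta^{-d/r}=1$. *)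

theory Defs
  imports "HOL-Analysis.Analysis"
begin

definition convex_Lr_ball :: "ereal \<Rightarrow> 'a::euclidean_space set \<Rightarrow> ('a \<Rightarrow> real) \<Rightarrow> bool" where
  "convex_Lr_ball r A f \<longleftrightarrow> convex_on A f \<and>
     (if r = \<infinity> then (\<forall>x\<in>A. \<bar>f x\<bar> \<le> 1)
      else set_nn_integral lebesgue A (\<lambda>x. ennreal (\<bar>f x\<bar> powr real_of_ereal r)) \<le> 1)"

definition inner_set :: "'a::euclidean_space set \<Rightarrow> real \<Rightarrow> 'a set" where
  "inner_set \<Omega> \<delta> = {x\<in>\<Omega>. infdist x (frontier \<Omega>) \<ge> \<delta>}"

definition delta_factor :: "nat \<Rightarrow> ereal \<Rightarrow> real \<Rightarrow> real" where
  "delta_factor d r \<delta> = (if r = \<infinity> then 1 else \<delta> powr (- real d / real_of_ereal r))"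

definition Lambda_const :: "nat \<Rightarrow> ereal \<Rightarrow> real" where
  "Lambda_const d r = max
     (if r = \<infinity> then 1 else (real d * Gamma (real d / 2) / pi powr (real d / 2)) powr (1 / real_of_ereal r))
     (fact d * real d * 2 ^ (d + 2))"

end

theory Submission
  imports Defs
begin


lemma two_sets_bound:
  fixes f :: "'a::euclidean_space \<Rightarrow> real"
  assumes O: "\<Omega> \<in> sets lebesgue" and A: "A \<in> fmeasurable lebesgue" and B: "B \<in> fmeasurable lebesgue"
   and AO: "A \<subseteq> \<Omega>" and BO: "B \<subseteq> \<Omega>" and AB: "A \<inter> B = {}" and s0: "0 \<le> s" and t0: "0 \<le> t"
   and sA: "\<forall>y\<in>A. s \<le> \<bar>f y\<bar>" and tB: "\<forall>y\<in>B. t \<le> \<bar>f y\<bar>"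
   and int: "set_nn_integral lebesgue \<Omega> (\<lambda>x. ennreal (\<bar>f x\<bar> powr \<rho>)) \<le> 1" and r0: "0 < \<rho>"
  shows "s powr \<rho> * measure lebesgue A + t powr \<rho> * measure lebesgue B \<le> 1"
proof -
  have "(\<integral>\<^sup>+x. ennreal (s powr \<rho>) * indicator A x + ennreal (t powr \<rho>) * indicator B x \<partial>lebesgue)
      \<le> (\<integral>\<^sup>+x. ennreal (\<bar>f x\<bar> powr \<rho>) * indicator \<Omega> x \<partial>lebesgue)"
  proof (rule nn_integral_mono)
    fix x
    show "ennreal (s powr \<rho>) * indicator A x + ennreal (t powr \<rho>) * indicator B x
          \<le> ennreal (\<bar>f x\<bar> powr \<rho>) * indicator \<Omega> x"
    proof (cases "x \<in> A")
      case True
      then have "x \<notin> B" "x \<in> \<Omega>" using AB AO by auto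
      moreover have "s powr \<rho> \<le> \<bar>f x\<bar> powr \<rho>" using sA True s0 r0 by (simp add: powr_mono2)
      ultimately show ?thesis using True by (simp add: ennreal_leI)
    next
      case False
      show ?thesis
      proof (cases "x \<in> B")
        case True
        then have "x \<in> \<Omega>" using BO by auto
        moreover have "t powr \<rho> \<le> \<bar>f x\<bar> powr \<rho>" using tB True t0 r0 by (simp add: powr_mono2)
        ultimately show ?thesis using True False by (simp add: ennreal_leI)
      qed (use False in simp)
    qed
  qed
  also have "\<dots> \<le> 1" using int .
  finally have "(\<integral>\<^sup>+x. ennreal (s powr \<rho>) * indicator A x + ennreal (t powr \<rho>) * indicator B x \<partial>lebesgue) \<le> 1" .
  moreover have "(\<integral>\<^sup>+x. ennreal (s powr \<rho>) * indicator A x + ennreal (t powr \<rho>) * indicator B x \<partial>lebesgue)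
     = ennreal (s powr \<rho> * measure lebesgue A + t powr \<rho> * measure lebesgue B)"
    using A B by (simp add: nn_integral_add nn_integral_cmult_indicator emeasure_eq_measure2 ennreal_mult[symmetric] ennreal_plus[symmetric] del: ennreal_plus)
  ultimately have "ennreal (s powr \<rho> * measure lebesgue A + t powr \<rho> * measure lebesgue B) \<le> 1"
    by (simp only:)
  then show ?thesis using ennreal_le_1 by blast
qed

lemma ball_measure: "0 \<le> d \<Longrightarrow> measure lebesgue (ball (x::'a::euclidean_space) d) = unit_ball_vol DIM('a) * d ^ DIM('a)"
  using content_ball[where 'a='a] by (simp add: measure_completion)

lemma upper_bound:
  fixes f :: "'a::euclidean_space \<Rightarrow> real"
  assumes O: "\<Omega> \<in> sets lebesgue" and ballO: "ball x \<delta> \<subseteq> \<Omega>" and d0: "0 < \<delta>"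
   and cvx: "convex_on \<Omega> f"
   and int: "set_nn_integral lebesgue \<Omega> (\<lambda>x. ennreal (\<bar>f x\<bar> powr \<rho>)) \<le> 1" and r0: "0 < \<rho>"
   and pos: "0 < f x"
  shows "f x powr \<rho> * (unit_ball_vol DIM('a) * \<delta> ^ DIM('a)) \<le> 2"
proof -
  define M where "M = f x"
  define U where "U = ball x \<delta>"
  define S where "S = {y\<in>U. M \<le> f y}"
  define R where "R = {y\<in>U. M \<le> f (2 *\<^sub>R x - y)}"
  have cvU: "convex_on U f" using convex_on_subset[OF cvx] ballO U_def by blast
  have cont: "continuous_on U f" using convex_on_continuous[OF _ cvU] U_def by simp
  have Ul: "U \<in> lmeasurable" using U_def by simp
  have "closedin (top_of_set U) (U \<inter> f -` {M..})"
    by (rule continuous_closedin_preimage[OF cont closed_atLeast])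
  moreover have "U \<inter> f -` {M..} = S" by (auto simp: S_def)
  ultimately have Sl: "S \<in> sets lebesgue" using lebesgue_closedin Ul by (metis fmeasurableD)
  have refl: "(\<lambda>y. 2 *\<^sub>R x - y) ` U \<subseteq> U"
  proof
    fix z assume "z \<in> (\<lambda>y. 2 *\<^sub>R x - y) ` U"
    then obtain y where y: "y \<in> U" "z = 2 *\<^sub>R x - y" by auto
    have "dist x z = dist x y" unfolding y(2) dist_norm by (simp add: scaleR_2 algebra_simps norm_minus_commute)
    then show "z \<in> U" using y by (simp add: U_def)
  qed
  have cont2: "continuous_on U (\<lambda>y. f (2 *\<^sub>R x - y))"
    by (rule continuous_on_compose2[OF cont _ refl]) (intro continuous_intros)
  have "closedin (top_of_set U) (U \<inter> (\<lambda>y. f (2 *\<^sub>R x - y)) -` {M..})"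
    by (rule continuous_closedin_preimage[OF cont2 closed_atLeast])
  moreover have "U \<inter> (\<lambda>y. f (2 *\<^sub>R x - y)) -` {M..} = R" by (auto simp: R_def)
  ultimately have Rl: "R \<in> sets lebesgue" using lebesgue_closedin Ul by (metis fmeasurableD)
  have RS: "R = (\<lambda>y. (-1) *\<^sub>R y + 2 *\<^sub>R x) ` S"
  proof (rule set_eqI, rule iffI)
    fix y assume "y \<in> R"
    then have "2 *\<^sub>R x - y \<in> S" using refl by (auto simp: R_def S_def)
    moreover have "y = (-1) *\<^sub>R (2 *\<^sub>R x - y) + 2 *\<^sub>R x" by simp
    ultimately show "y \<in> (\<lambda>y. (-1) *\<^sub>R y + 2 *\<^sub>R x) ` S" by blast
  next
    fix y assume "y \<in> (\<lambda>y. (-1) *\<^sub>R y + 2 *\<^sub>R x) ` S"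
    then obtain z where z: "z \<in> S" "y = 2 *\<^sub>R x - z" by auto
    then have "y \<in> U" using refl by (auto simp: S_def)
    then show "y \<in> R" using z by (auto simp: R_def S_def)
  qed
  have mR: "measure lebesgue R = measure lebesgue S"
    unfolding RS using measure_lebesgue_affine[of "-1" "2 *\<^sub>R x" S] by simp
  have cover: "U \<subseteq> S \<union> R"
  proof
    fix y assume yU: "y \<in> U"
    have y'U: "2 *\<^sub>R x - y \<in> U" using refl yU by blast
    have xU: "x \<in> U" using d0 U_def by simp
    have "f x = f ((1 - 1/2) *\<^sub>R y + (1/2) *\<^sub>R (2 *\<^sub>R x - y))" by (simp add: algebra_simps)
    also have "\<dots> \<le> (1 - 1/2) * f y + (1/2) * f (2 *\<^sub>R x - y)"
      by (rule convex_onD[OF cvU]) (use yU y'U in auto)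
    finally have "f x \<le> (f y + f (2 *\<^sub>R x - y)) / 2" by simp
    then have "M \<le> f y \<or> M \<le> f (2 *\<^sub>R x - y)" unfolding M_def by (cases "f x \<le> f y") auto
    then show "y \<in> S \<union> R" using yU by (auto simp: S_def R_def)
  qed
  have "measure lebesgue U \<le> measure lebesgue (S \<union> R)"
    by (rule measure_mono_fmeasurable[OF cover]) (use Ul Sl Rl in \<open>auto intro: fmeasurableI2[OF Ul] simp: S_def R_def\<close>)
  also have "\<dots> \<le> measure lebesgue S + measure lebesgue R" by (rule measure_Un_le[OF Sl Rl])
  finally have mU: "measure lebesgue U \<le> 2 * measure lebesgue S" using mR by simp
  have SO: "S \<subseteq> \<Omega>" using ballO by (auto simp: S_def U_def)
  have Sf: "S \<in> fmeasurable lebesgue" by (rule fmeasurableI2[OF Ul]) (use Sl in \<open>auto simp: S_def\<close>)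
  have sS: "\<forall>y\<in>S. M \<le> \<bar>f y\<bar>" unfolding S_def by auto
  have M0: "0 \<le> M" using pos M_def by simp
  have e1: "({}::'a set) \<in> fmeasurable lebesgue" by simp
  have tB: "\<forall>y\<in>({}::'a set). 0 \<le> \<bar>f y\<bar>" by simp
  have "M powr \<rho> * measure lebesgue S + 0 powr \<rho> * measure lebesgue ({}::'a set) \<le> 1"
    using two_sets_bound[OF O Sf e1 SO empty_subsetI Int_empty_right M0 order_refl sS tB int r0] .
  then have "M powr \<rho> * measure lebesgue S \<le> 1" by simp
  moreover have "M powr \<rho> * measure lebesgue U \<le> M powr \<rho> * (2 * measure lebesgue S)"
    by (rule mult_left_mono[OF mU]) simp
  ultimately have "M powr \<rho> * measure lebesgue U \<le> 2" by linarith
  then show ?thesis unfolding M_def U_def ball_measure[OF less_imp_le[OF d0]] .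
qed

lemma lower_bound:
  fixes f :: "'a::euclidean_space \<Rightarrow> real"
  assumes O: "\<Omega> \<in> sets lebesgue" and Il: "interior \<Omega> \<in> lmeasurable" and cI: "convex (interior \<Omega>)"
   and xI: "x \<in> interior \<Omega>" and cvx: "convex_on \<Omega> f"
   and int: "set_nn_integral lebesgue \<Omega> (\<lambda>x. ennreal (\<bar>f x\<bar> powr \<rho>)) \<le> 1" and r0: "0 < \<rho>"
   and neg: "f x < 0"
  shows "(- f x / 4) powr \<rho> * (measure lebesgue (interior \<Omega>) / 2 ^ DIM('a)) \<le> 1"
proof -
  define I where "I = interior \<Omega>"
  define M where "M = - f x"
  have M0: "0 < M" using neg M_def by simp
  have IO: "I \<subseteq> \<Omega>" using I_def interior_subset by blast
  have cvI: "convex_on I f" using convex_on_subset[OF cvx IO] cI I_def by simp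
  have cont: "continuous_on I f" using convex_on_continuous[OF _ cvI] I_def by simp
  have Il': "I \<in> lmeasurable" using Il I_def by simp
  define A where "A = {z\<in>I. M/2 \<le> f z}"
  define C where "C = I - A"
  define B where "B = {z\<in>I. f z \<le> - M/4}"
  have "closedin (top_of_set I) (I \<inter> f -` {M/2..})"
    by (rule continuous_closedin_preimage[OF cont closed_atLeast])
  moreover have "I \<inter> f -` {M/2..} = A" by (auto simp: A_def)
  ultimately have Al: "A \<in> sets lebesgue" using lebesgue_closedin Il' by (metis fmeasurableD)
  have "closedin (top_of_set I) (I \<inter> f -` {..-M/4})"
    by (rule continuous_closedin_preimage[OF cont closed_atMost])
  moreover have "I \<inter> f -` {..-M/4} = B" by (auto simp: B_def)
  ultimately have Bl: "B \<in> sets lebesgue" using lebesgue_closedin Il' by (metis fmeasurableD)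
  have Af: "A \<in> fmeasurable lebesgue" by (rule fmeasurableI2[OF Il']) (use Al in \<open>auto simp: A_def\<close>)
  have Bf: "B \<in> fmeasurable lebesgue" by (rule fmeasurableI2[OF Il']) (use Bl in \<open>auto simp: B_def\<close>)
  have Cf: "C \<in> fmeasurable lebesgue" unfolding C_def using Il' Al Af by (simp add: fmeasurable.Diff)
  have mI: "measure lebesgue I = measure lebesgue A + measure lebesgue C"
  proof -
    have "I = A \<union> C" "C - A = C" by (auto simp: A_def C_def)
    then show ?thesis using measure_Un2[OF Af Cf] by simp
  qed
  define T where "T = (\<lambda>z::'a. (1/2) *\<^sub>R z + (1/2) *\<^sub>R x)"
  have TCB: "T ` C \<subseteq> B"
  proof
    fix y assume "y \<in> T ` C"
    then obtain z where z: "z \<in> C" "y = T z" by auto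
    have zI: "z \<in> I" and fz: "f z < M/2" using z(1) by (auto simp: C_def A_def)
    have xI': "x \<in> I" using xI I_def by simp
    have yeq: "y = (1 - 1/2) *\<^sub>R z + (1/2) *\<^sub>R x" using z(2) T_def by simp
    have cI': "convex I" using cI I_def by simp
    have yI: "y \<in> I" unfolding yeq using zI xI' by (intro convexD[OF cI']) auto
    have "f y \<le> (1 - 1/2) * f z + (1/2) * f x"
      unfolding yeq by (rule convex_onD[OF cvI]) (use zI xI' in auto)
    then have "f y \<le> - M/4" using fz M_def by simp
    then show "y \<in> B" using yI by (simp add: B_def)
  qed
  have le: "emeasure lebesgue (T ` C) \<le> emeasure lebesgue B" by (rule emeasure_mono[OF TCB Bl])
  have eq: "emeasure lebesgue (T ` C) = ennreal (\<bar>1/2::real\<bar> ^ DIM('a)) * emeasure lebesgue C"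
    unfolding T_def by (rule emeasure_lebesgue_affine)
  have eC: "emeasure lebesgue C = ennreal (measure lebesgue C)" by (rule emeasure_eq_measure2[OF Cf])
  have eB: "emeasure lebesgue B = ennreal (measure lebesgue B)" by (rule emeasure_eq_measure2[OF Bf])
  have "ennreal (\<bar>1/2::real\<bar> ^ DIM('a)) * emeasure lebesgue C = ennreal ((1/2) ^ DIM('a) * measure lebesgue C)"
    unfolding eC by (subst ennreal_mult) auto
  then have "ennreal ((1/2) ^ DIM('a) * measure lebesgue C) \<le> ennreal (measure lebesgue B)"
    using le eq eB by metis
  then have "(1/2) ^ DIM('a) * measure lebesgue C \<le> measure lebesgue B"
    by (subst (asm) ennreal_le_iff) auto
  then have mB: "measure lebesgue C / 2 ^ DIM('a) \<le> measure lebesgue B"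
    by (simp add: power_one_over)
  have AB: "A \<inter> B = {}" using M0 by (auto simp: A_def B_def)
  have sA: "\<forall>y\<in>A. M/2 \<le> \<bar>f y\<bar>" by (auto simp: A_def)
  have tB: "\<forall>y\<in>B. M/4 \<le> \<bar>f y\<bar>" by (auto simp: B_def)
  have AO: "A \<subseteq> \<Omega>" and BO: "B \<subseteq> \<Omega>" using IO by (auto simp: A_def B_def)
  have main: "(M/2) powr \<rho> * measure lebesgue A + (M/4) powr \<rho> * measure lebesgue B \<le> 1"
    using two_sets_bound[OF O Af Bf AO BO AB _ _ sA tB int r0] M0 by simp
  have p: "(M/4) powr \<rho> \<le> (M/2) powr \<rho>" using M0 r0 by (intro powr_mono2) auto
  have d1: "(1::real) \<le> 2 ^ DIM('a)" by simp
  have "measure lebesgue I / 2 ^ DIM('a) \<le> measure lebesgue A + measure lebesgue C / 2 ^ DIM('a)"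
  proof -
    have "measure lebesgue A / 2 ^ DIM('a) \<le> measure lebesgue A"
      using d1 by (simp add: divide_le_eq mult_le_cancel_left1)
    then show ?thesis unfolding mI add_divide_distrib by linarith
  qed
  also have "\<dots> \<le> measure lebesgue A + measure lebesgue B" using mB by simp
  finally have "(M/4) powr \<rho> * (measure lebesgue I / 2 ^ DIM('a)) \<le> (M/4) powr \<rho> * (measure lebesgue A + measure lebesgue B)"
    by (rule mult_left_mono) simp
  also have "\<dots> = (M/4) powr \<rho> * measure lebesgue A + (M/4) powr \<rho> * measure lebesgue B" by (simp add: algebra_simps)
  also have "\<dots> \<le> (M/2) powr \<rho> * measure lebesgue A + (M/4) powr \<rho> * measure lebesgue B"
    using mult_right_mono[OF p, of "measure lebesgue A"] by simp
  also have "\<dots> \<le> 1" by (rule main)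
  finally show ?thesis unfolding M_def I_def .
qed

lemma ball_in_set:
  fixes x :: "'a::euclidean_space"
  assumes xO: "x \<in> \<Omega>" and inf: "\<delta> \<le> infdist x (frontier \<Omega>)"
  shows "ball x \<delta> \<subseteq> \<Omega>"
proof
  fix y assume y: "y \<in> ball x \<delta>"
  show "y \<in> \<Omega>"
  proof (rule ccontr)
    assume yn: "y \<notin> \<Omega>"
    have "closed_segment x y \<inter> frontier \<Omega> \<noteq> {}"
      by (rule connected_Int_frontier) (use xO yn in auto)
    then obtain z where z: "z \<in> closed_segment x y" "z \<in> frontier \<Omega>" by auto
    have "dist z x \<le> dist x y" using dist_in_closed_segment[OF z(1)] by simp
    moreover have "infdist x (frontier \<Omega>) \<le> dist x z" by (rule infdist_le[OF z(2)])
    ultimately show False using y inf by (simp add: dist_commute)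
  qed
qed

lemma root_bound:
  fixes y K \<rho> :: real
  assumes "0 \<le> y" "0 < \<rho>" "y powr \<rho> \<le> K"
  shows "y \<le> K powr (1/\<rho>)"
proof -
  have "y = (y powr \<rho>) powr (1/\<rho>)" using assms by (simp add: powr_powr powr_one)
  also have "\<dots> \<le> K powr (1/\<rho>)" using assms by (intro powr_mono2) auto
  finally show ?thesis .
qed

lemma const_eq:
  assumes "0 < d"
  shows "2 / unit_ball_vol (real d) = real d * Gamma (real d / 2) / pi powr (real d / 2)"
proof -
  have "real d / 2 \<notin> \<int>\<^sub>\<le>\<^sub>0" using assms nonpos_Ints_nonpos by fastforce
  then have "Gamma (real d / 2 + 1) = (real d / 2) * Gamma (real d / 2)" by (rule Gamma_plus1)
  then show ?thesis unfolding unit_ball_vol_def by (simp add: field_simps)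
qed

lemma main_bound:
  fixes \<Omega> :: "'a::euclidean_space set" and f :: "'a \<Rightarrow> real"
  assumes cO: "compact \<Omega>" and cvO: "convex \<Omega>"
    and mO: "measure lebesgue \<Omega> \<ge> 1 / fact DIM('a)"
    and r1: "1 \<le> r" and d0: "0 < \<delta>" and d1: "\<delta> \<le> 1" and fC: "convex_Lr_ball r \<Omega> f"
    and xin: "x \<in> inner_set \<Omega> \<delta>"
  shows "\<bar>f x\<bar> \<le> Lambda_const DIM('a) r * delta_factor DIM('a) r \<delta>"
proof -
  define d where "d = DIM('a)"
  have dpos: "0 < d" using d_def by simp
  have xO: "x \<in> \<Omega>" and infx: "\<delta> \<le> infdist x (frontier \<Omega>)" using xin by (auto simp: inner_set_def)
  have cvf: "convex_on \<Omega> f" using fC by (simp add: convex_Lr_ball_def)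
  have L2: "fact d * real d * 2 ^ (d + 2) \<le> Lambda_const d r" unfolding Lambda_const_def by simp
  have L2pos: "1 \<le> fact d * real d * 2 ^ (d + 2)"
  proof -
    have "(1::real) \<le> fact d" by simp
    moreover have "(1::real) \<le> real d" using dpos by simp
    moreover have "(1::real) \<le> 2 ^ (d+2)" by (rule one_le_power) simp
    ultimately show ?thesis by (metis mult_mono' mult_1 zero_le_one order_trans)
  qed
  show ?thesis
  proof (cases "r = \<infinity>")
    case True
    then have "\<bar>f x\<bar> \<le> 1" using fC xO by (simp add: convex_Lr_ball_def)
    then show ?thesis using True L2 L2pos by (simp add: delta_factor_def d_def)
  next
    case False
    define \<rho> where "\<rho> = real_of_ereal r"
    have rr: "r = ereal \<rho>" and \<rho>1: "1 \<le> \<rho>" using r1 False unfolding \<rho>_def by (cases r; auto)+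
    have r0: "0 < \<rho>" using \<rho>1 by simp
    have int: "set_nn_integral lebesgue \<Omega> (\<lambda>x. ennreal (\<bar>f x\<bar> powr \<rho>)) \<le> 1"
      using fC False by (simp add: convex_Lr_ball_def \<rho>_def)
    have df: "delta_factor d r \<delta> = \<delta> powr (- real d / \<rho>)" using False by (simp add: delta_factor_def \<rho>_def)
    have df1: "1 \<le> \<delta> powr (- real d / \<rho>)"
    proof -
      have "\<delta> powr (real d / \<rho>) \<le> 1" using d0 d1 r0 by (intro powr_le1) auto
      moreover have "0 < \<delta> powr (real d / \<rho>)" using d0 by simp
      moreover have "\<delta> powr (- real d / \<rho>) = inverse (\<delta> powr (real d / \<rho>))"
        by (subst minus_divide_left[symmetric]) (rule powr_minus)
      ultimately show ?thesis using one_le_inverse by metis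
    qed
    have Lpos: "0 \<le> Lambda_const d r" using L2 L2pos by linarith
    have bO: "ball x \<delta> \<subseteq> \<Omega>" by (rule ball_in_set[OF xO infx])
    have bI: "ball x \<delta> \<subseteq> interior \<Omega>" using bO by (simp add: interior_maximal)
    have xI: "x \<in> interior \<Omega>" using bI d0 by auto
    have O: "\<Omega> \<in> sets lebesgue" using lmeasurable_compact[OF cO] by (simp add: fmeasurableD)
    have bdd: "bounded \<Omega>" using cO by (simp add: compact_imp_bounded)
    have Il: "interior \<Omega> \<in> lmeasurable" by (rule lmeasurable_interior[OF bdd])
    have mI: "measure lebesgue (interior \<Omega>) = measure lebesgue \<Omega>"
      by (rule measure_interior[OF bdd negligible_convex_frontier[OF cvO]])
    consider "0 < f x" | "f x = 0" | "f x < 0" by linarith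
    then show ?thesis
    proof cases
      case 1
      define c where "c = real d * Gamma (real d / 2) / pi powr (real d / 2)"
      have ub: "f x powr \<rho> * (unit_ball_vol d * \<delta> ^ d) \<le> 2"
        using upper_bound[OF O bO d0 cvf int r0 1] d_def by simp
      have uv: "0 < unit_ball_vol d * \<delta> ^ d" using d0 by simp
      have "f x powr \<rho> \<le> 2 / (unit_ball_vol d * \<delta> ^ d)" using ub uv by (simp add: le_divide_eq)
      also have "\<dots> = c * \<delta> powr (- real d)"
        using const_eq[OF dpos] d0 by (simp add: c_def powr_minus powr_realpow field_simps)
      finally have "f x \<le> (c * \<delta> powr (- real d)) powr (1/\<rho>)" using 1 r0 by (intro root_bound) auto
      also have "\<dots> = c powr (1/\<rho>) * \<delta> powr (- real d / \<rho>)"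
        by (simp add: powr_mult powr_powr)
      also have "c powr (1/\<rho>) \<le> Lambda_const d r"
        unfolding Lambda_const_def using False by (simp add: c_def \<rho>_def)
      then have "c powr (1/\<rho>) * \<delta> powr (- real d / \<rho>) \<le> Lambda_const d r * \<delta> powr (- real d / \<rho>)"
        by (intro mult_right_mono) auto
      finally show ?thesis using 1 df d_def by simp
    next
      case 2
      then show ?thesis using Lpos df df1 d_def by simp
    next
      case 3
      have lb: "(- f x / 4) powr \<rho> * (measure lebesgue (interior \<Omega>) / 2 ^ d) \<le> 1"
        using lower_bound[OF O Il convex_interior[OF cvO] xI cvf int r0 3] d_def by simp
      have fpos: "0 < (2::real) ^ d * fact d" by simp
      have "1 / (2 ^ d * fact d) \<le> measure lebesgue (interior \<Omega>) / 2 ^ d"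
        using mO mI d_def by (simp add: divide_simps)
      then have "(- f x / 4) powr \<rho> * (1 / (2 ^ d * fact d)) \<le> 1"
        using lb by (meson mult_left_mono order_trans powr_ge_zero)
      then have "(- f x / 4) powr \<rho> \<le> 2 ^ d * fact d" using fpos by (simp add: divide_simps)
      then have "- f x / 4 \<le> (2 ^ d * fact d) powr (1/\<rho>)" using 3 r0 by (intro root_bound) auto
      also have "\<dots> \<le> (2 ^ d * fact d) powr 1"
      proof (rule powr_mono)
        show "1/\<rho> \<le> 1" using \<rho>1 by simp
        have "(1::real) \<le> 2 ^ d" by simp
        moreover have "(1::real) \<le> fact d" by simp
        ultimately show "1 \<le> (2::real) ^ d * fact d" by (metis mult_mono' mult_1 zero_le_one order_trans)
      qed
      also have "\<dots> = 2 ^ d * fact d" using fpos by simp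
      finally have "- f x / 4 \<le> 2 ^ d * fact d" .
      then have "\<bar>f x\<bar> \<le> 4 * (2 ^ d * fact d)" using 3 by linarith
      also have "\<dots> = fact d * 1 * 2 ^ (d + 2)" by (simp add: power_add)
      also have "\<dots> \<le> fact d * real d * 2 ^ (d + 2)" using dpos by (intro mult_right_mono mult_left_mono) auto
      also have "\<dots> \<le> Lambda_const d r" by (rule L2)
      also have "\<dots> \<le> Lambda_const d r * \<delta> powr (- real d / \<rho>)"
        using Lpos df1 by (simp add: mult_le_cancel_left1)
      finally show ?thesis using df d_def by simp
    qed
  qed
qed


theorem mainTheorem6:
  shows "(\<exists>\<Lambda>::real. \<forall>(\<Omega>::'a::euclidean_space set) r \<delta> f x.
            compact \<Omega> \<and> convex \<Omega> \<and> \<Omega> \<subseteq> cbox 0 One \<and>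
            measure lebesgue \<Omega> \<ge> 1 / fact DIM('a) \<and>
            1 \<le> r \<and> 0 < \<delta> \<and> \<delta> \<le> 1 \<and> convex_Lr_ball r \<Omega> f \<and> x \<in> inner_set \<Omega> \<delta>
            \<longrightarrow> \<bar>f x\<bar> \<le> \<Lambda> * delta_factor DIM('a) r \<delta>)
       \<and> (\<forall>(\<Omega>::'a::euclidean_space set) r \<delta> f x.
            compact \<Omega> \<and> convex \<Omega> \<and> \<Omega> \<subseteq> cbox 0 One \<and>
            measure lebesgue \<Omega> \<ge> 1 / fact DIM('a) \<and>
            1 \<le> r \<and> 0 < \<delta> \<and> \<delta> \<le> 1 \<and> convex_Lr_ball r \<Omega> f \<and> x \<in> inner_set \<Omega> \<delta>
            \<longrightarrow> \<bar>f x\<bar> \<le> Lambda_const DIM('a) r * delta_factor DIM('a) r \<delta>)"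
proof (rule conjI)
  define d where "d = DIM('a)"
  define c where "c = real d * Gamma (real d / 2) / pi powr (real d / 2)"
  define \<Lambda> where "\<Lambda> = max (max c 1) (fact d * real d * 2 ^ (d + 2))"
  have cpos: "0 < c" using d_def by (simp add: c_def)
  show "\<forall>(\<Omega>::'a::euclidean_space set) r \<delta> f x.
            compact \<Omega> \<and> convex \<Omega> \<and> \<Omega> \<subseteq> cbox 0 One \<and>
            measure lebesgue \<Omega> \<ge> 1 / fact DIM('a) \<and>
            1 \<le> r \<and> 0 < \<delta> \<and> \<delta> \<le> 1 \<and> convex_Lr_ball r \<Omega> f \<and> x \<in> inner_set \<Omega> \<delta>
            \<longrightarrow> \<bar>f x\<bar> \<le> Lambda_const DIM('a) r * delta_factor DIM('a) r \<delta>"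
    using main_bound by blast
  then have all: "\<forall>(\<Omega>::'a::euclidean_space set) r \<delta> f x.
            compact \<Omega> \<and> convex \<Omega> \<and> \<Omega> \<subseteq> cbox 0 One \<and>
            measure lebesgue \<Omega> \<ge> 1 / fact DIM('a) \<and>
            1 \<le> r \<and> 0 < \<delta> \<and> \<delta> \<le> 1 \<and> convex_Lr_ball r \<Omega> f \<and> x \<in> inner_set \<Omega> \<delta>
            \<longrightarrow> \<bar>f x\<bar> \<le> Lambda_const DIM('a) r * delta_factor DIM('a) r \<delta>" .
  have LL: "Lambda_const d r \<le> \<Lambda>" if r1: "1 \<le> r" for r :: ereal
  proof (cases "r = \<infinity>")
    case True
    then show ?thesis unfolding Lambda_const_def \<Lambda>_def by auto
  next
    case False
    define \<rho> where "\<rho> = real_of_ereal r"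
    have \<rho>1: "1 \<le> \<rho>" using r1 False unfolding \<rho>_def by (cases r) auto
    have "c powr (1 / \<rho>) \<le> max c 1"
    proof (cases "1 \<le> c")
      case True
      have "c powr (1 / \<rho>) \<le> c powr 1" using True \<rho>1 by (intro powr_mono) auto
      then show ?thesis using cpos by simp
    next
      case False
      have "c powr (1 / \<rho>) \<le> 1" using False cpos \<rho>1 by (intro powr_le1) auto
      then show ?thesis by simp
    qed
    then show ?thesis unfolding Lambda_const_def \<Lambda>_def using False
      by (simp add: c_def \<rho>_def)
  qed
  have dfpos: "0 \<le> delta_factor d r \<delta>" for r \<delta> by (simp add: delta_factor_def)
  show "\<exists>\<Lambda>::real. \<forall>(\<Omega>::'a::euclidean_space set) r \<delta> f x.
            compact \<Omega> \<and> convex \<Omega> \<and> \<Omega> \<subseteq> cbox 0 One \<and>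
            measure lebesgue \<Omega> \<ge> 1 / fact DIM('a) \<and>
            1 \<le> r \<and> 0 < \<delta> \<and> \<delta> \<le> 1 \<and> convex_Lr_ball r \<Omega> f \<and> x \<in> inner_set \<Omega> \<delta>
            \<longrightarrow> \<bar>f x\<bar> \<le> \<Lambda> * delta_factor DIM('a) r \<delta>"
  proof (intro exI allI impI)
    fix \<Omega> :: "'a set" and r \<delta> f x
    assume h: "compact \<Omega> \<and> convex \<Omega> \<and> \<Omega> \<subseteq> cbox 0 One \<and>
            measure lebesgue \<Omega> \<ge> 1 / fact DIM('a) \<and>
            1 \<le> r \<and> 0 < \<delta> \<and> \<delta> \<le> 1 \<and> convex_Lr_ball r \<Omega> f \<and> x \<in> inner_set \<Omega> \<delta>"
    then have "\<bar>f x\<bar> \<le> Lambda_const d r * delta_factor d r \<delta>" using all d_def by blast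
    also have "\<dots> \<le> \<Lambda> * delta_factor d r \<delta>"
      using LL[of r] h dfpos[of r \<delta>] by (intro mult_right_mono) auto
    finally show "\<bar>f x\<bar> \<le> \<Lambda> * delta_factor DIM('a) r \<delta>" using d_def by simp
  qed
qed

end
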